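(* Let $k\ge 1$, let $n_0,n_1,\dots,n_k$ be positive integers, $n^{*}=n_0+n_1+\cdots+n_k$, and let $\sigma_0,\dots,\sigma_k>0$. Let $h:[0,\infty)\to[0,\infty)$ be a function such that $$\prod_{i=0}^{k}\sigma_i^{-n_i}\,h\!\left(\sum_{i=0}^{k}\sigma_i^{-2}\|\mathbf{x}_i\|^{2}\right)$$ is a probability density on $\mathbb{R}^{n^{*}}$, and let $(\mathbf{x}_0',\dots,\mathbf{x}_k')'$, $\mathbf{x}_i\in\mathbb{R}^{n_i}$, have this density. Let $s_0=\|\mathbf{x}_0\|^2$, $\mathbf{t}_i=s_0^{-1/2}\mathbf{x}_i$ and $\beta_i=\sigma_i^{2}/\sigma_0^{2}$ for $i=1,\dots,k$. Then $(\mathbf{t}_1,\dots,\mathbf{t}_k)$ has density on $\mathbb{R}^{n_1}\times\cdots\times\mathbb{R}^{n_k}$ $$\frac{\Gamma[n^{*}/2]\prod_{i=1}^{k}\beta_i^{-n_i/2}}{\Gamma[n_0/2]\,\pi^{(n_1+\cdots+n_k)/2}}\left(1+\sum_{i=1}^{k}\beta_i^{-1}\|\mathbf{t}_i\|^{2}\right)^{-n^{*}/2},$$ which in particular does not depend on $h$.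
   Context: $\|\cdot\|$ denotes the Euclidean norm. The law of $(\mathbf{t}_1,\dots,\mathbf{t}_k)$ is called the multivector variate $t$ distribution. *)

theory Defs
  imports "HOL-Probability.Probability"
begin

text \<open>Coordinates of a block vector: the vector (x_a,...,x_b), with x_i in R^(n i),
  is a function on the index set of pairs (i,j) with a <= i <= b and j < n i.\<close>
definition blk_idx :: "(nat \<Rightarrow> nat) \<Rightarrow> nat \<Rightarrow> nat \<Rightarrow> (nat \<times> nat) set" where
  "blk_idx n a b = {(i, j). a \<le> i \<and> i \<le> b \<and> j < n i}"

definition blk_lebesgue :: "(nat \<Rightarrow> nat) \<Rightarrow> nat \<Rightarrow> nat \<Rightarrow> ((nat \<times> nat) \<Rightarrow> real) measure" where
  "blk_lebesgue n a b = (\<Pi>\<^sub>M p\<in>blk_idx n a b. lborel)"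

definition blk_sqnorm :: "(nat \<Rightarrow> nat) \<Rightarrow> ((nat \<times> nat) \<Rightarrow> real) \<Rightarrow> nat \<Rightarrow> real" where
  "blk_sqnorm n x i = (\<Sum>j<n i. (x (i, j))\<^sup>2)"

end

theory Submission
  imports Defs
begin

lemma ennreal_solve:
  assumes "c > 0" "d \<ge> 0" "ennreal c * X = ennreal d"
  shows "X = ennreal (d / c)"
proof -
  have "ennreal (1/c) * ennreal c = 1" using assms by (simp add: ennreal_mult'[symmetric])
  then have "X = ennreal (1/c) * (ennreal c * X)" by (simp add: mult.assoc[symmetric])
  also have "\<dots> = ennreal (d / c)" using assms by (simp add: ennreal_mult'[symmetric])
  finally show ?thesis .
qed

lemma gauss_nn:
  assumes "c > (0::real)"
  shows "(\<integral>\<^sup>+ x. ennreal (exp (- (c * x\<^sup>2))) \<partial>lborel) = ennreal (sqrt (pi / c))"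
proof -
  define \<sigma> where "\<sigma> = sqrt (1 / (2 * c))"
  have s1: "\<sigma> > 0" unfolding \<sigma>_def using assms by (simp add: real_sqrt_gt_zero)
  have s: "\<sigma>\<^sup>2 = 1 / (2*c)" unfolding \<sigma>_def using assms by simp
  interpret prob_space "density lborel (normal_density 0 \<sigma>)" using s1 by (rule prob_space_normal_density)
  have "1 = (\<integral>\<^sup>+ x. ennreal (normal_density 0 \<sigma> x) \<partial>lborel)"
    using emeasure_space_1 by (simp add: emeasure_density)
  also have "\<dots> = (\<integral>\<^sup>+ x. ennreal (sqrt (c / pi)) * ennreal (exp (- (c * x\<^sup>2))) \<partial>lborel)"
  proof (rule nn_integral_cong)
    fix x :: real
    have "sqrt (2 * pi * \<sigma>\<^sup>2) = sqrt (pi / c)" using s by (simp add: field_simps)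
    moreover have "- (x - 0)\<^sup>2 / (2 * \<sigma>\<^sup>2) = - (c * x\<^sup>2)" using s s1 assms by (simp add: divide_simps mult_ac)
    ultimately show "ennreal (normal_density 0 \<sigma> x) = ennreal (sqrt (c / pi)) * ennreal (exp (- (c * x\<^sup>2)))"
      unfolding normal_density_def using assms
      by (simp add: ennreal_mult'[symmetric] real_sqrt_divide)
  qed
  also have "\<dots> = ennreal (sqrt (c / pi)) * (\<integral>\<^sup>+ x. ennreal (exp (- (c * x\<^sup>2))) \<partial>lborel)"
    by (rule nn_integral_cmult) measurable
  finally have *: "ennreal (sqrt (c / pi)) * (\<integral>\<^sup>+ x. ennreal (exp (- (c * x\<^sup>2))) \<partial>lborel) = 1" ..
  have pos: "sqrt (c / pi) > 0" using assms by simp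
  have "(\<integral>\<^sup>+ x. ennreal (exp (- (c * x\<^sup>2))) \<partial>lborel) = ennreal (1 / sqrt (c / pi))"
    using ennreal_solve[OF pos _ *[unfolded ennreal_1[symmetric]]] by simp
  then show ?thesis using assms by (simp add: real_sqrt_divide)
qed

lemma gamma_nn:
  assumes "a > (0::real)" "b > 0"
  shows "(\<integral>\<^sup>+ s. ennreal (indicator {0..} s * s powr (a - 1) * exp (- (b * s))) \<partial>lborel) = ennreal (Gamma a / b powr a)"
proof -
  have "ennreal (Gamma a) = (\<integral>\<^sup>+ x. ennreal (indicator {0..} x * (x powr (a - 1) / exp x)) \<partial>lborel)"
    by (rule nn_integral_has_integral_lebesgue[OF _ Gamma_integral_real[OF assms(1)], symmetric]) simp
  also have "\<dots>
     = ennreal b * (\<integral>\<^sup>+ s. ennreal (indicator {0..} (0 + b * s) * ((0 + b * s) powr (a - 1) / exp (0 + b * s))) \<partial>lborel)"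
    using assms by (subst nn_integral_real_affine[where c=b and t=0]) auto
  also have "(\<integral>\<^sup>+ s. ennreal (indicator {0..} (0 + b * s) * ((0 + b * s) powr (a - 1) / exp (0 + b * s))) \<partial>lborel)
     = (\<integral>\<^sup>+ s. ennreal (b powr (a - 1)) * ennreal (indicator {0..} s * s powr (a - 1) * exp (- (b * s))) \<partial>lborel)"
  proof (rule nn_integral_cong)
    fix s :: real
    show "ennreal (indicator {0..} (0 + b * s) * ((0 + b * s) powr (a - 1) / exp (0 + b * s))) =
          ennreal (b powr (a - 1)) * ennreal (indicator {0..} s * s powr (a - 1) * exp (- (b * s)))"
      using assms
    proof (cases "s \<ge> 0")
      case True
      then have "(b * s) powr (a - 1) = b powr (a - 1) * s powr (a - 1)" using assms by (simp add: powr_mult)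
      moreover have "1 / exp (b * s) = exp (- (b * s))" by (simp add: exp_minus field_simps)
      ultimately show ?thesis using True assms
        by (simp add: ennreal_mult'[symmetric] divide_inverse exp_minus mult_ac)
    next
      case False
      then have "\<not> b * s \<ge> 0" using assms by (simp add: zero_le_mult_iff)
      then show ?thesis using False by simp
    qed
  qed
  also have "\<dots> = ennreal (b powr (a - 1)) * (\<integral>\<^sup>+ s. ennreal (indicator {0..} s * s powr (a - 1) * exp (- (b * s))) \<partial>lborel)"
    by (rule nn_integral_cmult) measurable
  finally have *: "ennreal b * (ennreal (b powr (a - 1)) * (\<integral>\<^sup>+ s. ennreal (indicator {0..} s * s powr (a - 1) * exp (- (b * s))) \<partial>lborel)) = ennreal (Gamma a)" by simp
  have bb: "ennreal b * ennreal (b powr (a - 1)) = ennreal (b powr a)"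
    using assms by (simp add: ennreal_mult'[symmetric] powr_diff field_simps)
  have "ennreal (b powr a) * (\<integral>\<^sup>+ s. ennreal (indicator {0..} s * s powr (a - 1) * exp (- (b * s))) \<partial>lborel) = ennreal (Gamma a)"
    using * bb by (simp add: mult.assoc[symmetric])
  then show ?thesis using assms ennreal_solve[of "b powr a" "Gamma a"] by simp
qed

lemma powr_neg_half:
  assumes "s > (0::real)"
  shows "s powr (-1/2) = inverse (sqrt s)"
proof -
  have "s powr (-1/2) = s powr (-(1/2))" by simp
  also have "\<dots> = inverse (s powr (1/2))" by (rule powr_minus)
  also have "s powr (1/2) = sqrt s" using assms by (intro powr_half_sqrt) simp
  finally show ?thesis .
qed

lemma sqrt_split:
  assumes "s > 0" "w > (0::real)"
  shows "sqrt (pi / (s * w)) = sqrt pi * s powr (-1/2) * w powr (-1/2)"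
  unfolding powr_neg_half[OF assms(1)] powr_neg_half[OF assms(2)]
  by (simp add: real_sqrt_divide real_sqrt_mult divide_inverse real_sqrt_inverse)

lemma gamma_mixture:
  assumes p0: "p > (0::real)" and u: "u \<ge> 0"
  shows "ennreal ((1 + u) powr (-p)) = ennreal (1 / Gamma p) * (\<integral>\<^sup>+ s. ennreal (indicator {0..} s * s powr (p - 1) * exp (- ((1 + u) * s))) \<partial>lborel)"
proof -
  have Gp: "Gamma p > 0" using p0 by simp
  have "(1 + u) powr (-p) = 1 / Gamma p * (Gamma p / (1 + u) powr p)"
    using Gp u by (simp add: powr_minus divide_inverse)
  then show ?thesis using gamma_nn[OF p0, of "1 + u"] Gp u by (simp add: ennreal_mult'[symmetric])
qed

lemma gauss_prod:
  fixes L :: "'i set" and w :: "'i \<Rightarrow> real"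
  assumes L: "finite L" and w: "\<forall>q\<in>L. w q > 0" and s: "s > 0"
  shows "(\<integral>\<^sup>+ t. (\<Prod>q\<in>L. ennreal (exp (- ((w q * s) * (t q)\<^sup>2)))) \<partial>PiM L (\<lambda>_. lborel))
     = ennreal (sqrt pi ^ card L * s powr (- (real (card L) / 2)) * (\<Prod>q\<in>L. w q powr (-1/2)))"
proof -
  interpret product_sigma_finite "\<lambda>_. lborel" by standard
  have "(\<integral>\<^sup>+ t. (\<Prod>q\<in>L. ennreal (exp (- ((w q * s) * (t q)\<^sup>2)))) \<partial>PiM L (\<lambda>_. lborel))
      = (\<Prod>q\<in>L. \<integral>\<^sup>+ x. ennreal (exp (- ((w q * s) * x\<^sup>2))) \<partial>lborel)"
    by (rule product_nn_integral_prod[OF L]) measurable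
  also have "\<dots> = (\<Prod>q\<in>L. ennreal (sqrt pi * s powr (-1/2) * w q powr (-1/2)))"
  proof (rule prod.cong[OF refl])
    fix q assume "q \<in> L"
    then have "w q * s > 0" using w s by simp
    then show "(\<integral>\<^sup>+ x. ennreal (exp (- ((w q * s) * x\<^sup>2))) \<partial>lborel) = ennreal (sqrt pi * s powr (-1/2) * w q powr (-1/2))"
      using gauss_nn[of "w q * s"] sqrt_split[OF s, of "w q"] \<open>q \<in> L\<close> w by (simp add: mult.commute)
  qed
  also have "\<dots> = ennreal (\<Prod>q\<in>L. sqrt pi * s powr (-1/2) * w q powr (-1/2))"
    by (rule prod_ennreal) simp
  also have "(\<Prod>q\<in>L. sqrt pi * s powr (-1/2) * w q powr (-1/2)) = sqrt pi ^ card L * (s powr (-1/2)) ^ card L * (\<Prod>q\<in>L. w q powr (-1/2))"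
    by (simp add: prod.distrib power_mult_distrib)
  also have "(s powr (-1/2)) ^ card L = s powr (- (real (card L) / 2))"
    using s by (simp add: powr_power)
  finally show ?thesis .
qed

lemma student_integral:
  fixes L :: "'i set" and w :: "'i \<Rightarrow> real" and p :: real
  assumes L: "finite L" and w: "\<forall>q\<in>L. w q > 0" and p: "p > real (card L) / 2"
  shows "(\<integral>\<^sup>+ t. ennreal ((1 + (\<Sum>q\<in>L. w q * (t q)\<^sup>2)) powr (-p)) \<partial>PiM L (\<lambda>_. lborel))
    = ennreal (sqrt pi ^ card L * (\<Prod>q\<in>L. w q powr (-1/2)) * Gamma (p - real (card L) / 2) / Gamma p)"
proof -
  interpret product_sigma_finite "\<lambda>_. lborel" by standard
  interpret P: sigma_finite_measure "PiM L (\<lambda>_. lborel)" by (rule sigma_finite[OF L])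
  interpret pair_sigma_finite lborel "PiM L (\<lambda>_. lborel)" by standard
  define m where "m = card L"
  define C where "C = sqrt pi ^ m * (\<Prod>q\<in>L. w q powr (-1/2))"
  have Cpos: "C \<ge> 0" unfolding C_def by (intro mult_nonneg_nonneg zero_le_power prod_nonneg) auto
  have "real (card L) / 2 \<ge> 0" by simp
  then have p0: "p > 0" using p by linarith
  have pm: "p - real m / 2 > 0" using p unfolding m_def by simp
  have Gp: "Gamma p > 0" using p0 by simp
  define F where "F s t = ennreal (indicator {0..} s * s powr (p - 1) * exp (- s)) * (\<Prod>q\<in>L. ennreal (exp (- ((w q * s) * (t q)\<^sup>2))))" for s :: real and t :: "'i \<Rightarrow> real"
  have Mj1: "(\<lambda>(t, s). F s t) \<in> borel_measurable (PiM L (\<lambda>_. lborel) \<Otimes>\<^sub>M lborel)"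
    unfolding F_def by measurable
  have Mj2: "(\<lambda>(s, t). F s t) \<in> borel_measurable (lborel \<Otimes>\<^sub>M PiM L (\<lambda>_. lborel))"
    unfolding F_def by measurable
  have step1: "ennreal ((1 + (\<Sum>q\<in>L. w q * (t q)\<^sup>2)) powr (-p))
     = ennreal (1 / Gamma p) * (\<integral>\<^sup>+ s. F s t \<partial>lborel)" for t
  proof -
    define u where "u = (\<Sum>q\<in>L. w q * (t q)\<^sup>2)"
    have u: "u \<ge> 0" unfolding u_def using w by (auto intro!: sum_nonneg)
    have "(\<integral>\<^sup>+ s. F s t \<partial>lborel)
        = (\<integral>\<^sup>+ s. ennreal (indicator {0..} s * s powr (p - 1) * exp (- ((1 + u) * s))) \<partial>lborel)"
    proof (rule nn_integral_cong)
      fix s :: real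
      have "- ((1 + u) * s) = - s + (\<Sum>q\<in>L. - (w q * s * (t q)\<^sup>2))"
        unfolding u_def by (simp add: algebra_simps sum_distrib_left sum_negf)
      then have e: "exp (- ((1 + u) * s)) = exp (- s) * (\<Prod>q\<in>L. exp (- (w q * s * (t q)\<^sup>2)))"
        by (simp only: exp_add exp_sum[OF L])
      have "(\<Prod>q\<in>L. ennreal (exp (- ((w q * s) * (t q)\<^sup>2)))) = ennreal (\<Prod>q\<in>L. exp (- (w q * s * (t q)\<^sup>2)))"
        by (rule prod_ennreal) simp
      then show "F s t = ennreal (indicator {0..} s * s powr (p - 1) * exp (- ((1 + u) * s)))"
        unfolding F_def e by (simp add: ennreal_mult'[symmetric] mult.assoc)
    qed
    then show ?thesis using gamma_mixture[OF p0 u] unfolding u_def by simp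
  qed
  have "(\<integral>\<^sup>+ t. ennreal ((1 + (\<Sum>q\<in>L. w q * (t q)\<^sup>2)) powr (-p)) \<partial>PiM L (\<lambda>_. lborel))
      = (\<integral>\<^sup>+ t. ennreal (1 / Gamma p) * (\<integral>\<^sup>+ s. F s t \<partial>lborel) \<partial>PiM L (\<lambda>_. lborel))"
    by (simp only: step1)
  also have "\<dots> = ennreal (1 / Gamma p) * (\<integral>\<^sup>+ t. (\<integral>\<^sup>+ s. F s t \<partial>lborel) \<partial>PiM L (\<lambda>_. lborel))"
    by (rule nn_integral_cmult) (rule lborel.borel_measurable_nn_integral[OF Mj1])
  also have "(\<integral>\<^sup>+ t. (\<integral>\<^sup>+ s. F s t \<partial>lborel) \<partial>PiM L (\<lambda>_. lborel))
     = (\<integral>\<^sup>+ s. (\<integral>\<^sup>+ t. F s t \<partial>PiM L (\<lambda>_. lborel)) \<partial>lborel)"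
    by (rule Fubini') (rule Mj2)
  also have "\<dots> = (\<integral>\<^sup>+ s. ennreal C * ennreal (indicator {0..} s * s powr ((p - real m / 2) - 1) * exp (- (1 * s))) \<partial>lborel)"
  proof (rule nn_integral_cong)
    fix s :: real
    have "(\<integral>\<^sup>+ t. F s t \<partial>PiM L (\<lambda>_. lborel))
        = ennreal (indicator {0..} s * s powr (p - 1) * exp (- s)) * (\<integral>\<^sup>+ t. (\<Prod>q\<in>L. ennreal (exp (- ((w q * s) * (t q)\<^sup>2)))) \<partial>PiM L (\<lambda>_. lborel))"
      unfolding F_def by (rule nn_integral_cmult) measurable
    also have "\<dots> = ennreal C * ennreal (indicator {0..} s * s powr ((p - real m / 2) - 1) * exp (- (1 * s)))"
    proof (cases "s > 0")
      case True
      have e: "s powr (p - 1) * s powr (- (real m / 2)) = s powr (p - real m / 2 - 1)"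
      proof -
        have "s powr (p - 1) * s powr (- (real m / 2)) = s powr ((p - 1) + (- (real m / 2)))" by (rule powr_add[symmetric])
        also have "(p - 1) + (- (real m / 2)) = p - real m / 2 - 1" by simp
        finally show ?thesis .
      qed
      have r: "s powr (p - 1) * exp (- s) * (sqrt pi ^ m * s powr (- (real m / 2)) * (\<Prod>q\<in>L. w q powr (-1/2)))
           = C * (s powr (p - real m / 2 - 1) * exp (- s))"
        unfolding C_def e[symmetric] by (simp add: mult_ac)
      show ?thesis unfolding gauss_prod[OF L w True] m_def[symmetric]
        using True Cpos r by (simp add: ennreal_mult'[symmetric] prod_nonneg)
    next
      case False
      then have "s < 0 \<or> s = 0" by linarith
      then have z: "indicator {0..} s * s powr (p - 1) = (0::real)" "indicator {0..} s * s powr ((p - real m / 2) - 1) = (0::real)"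
        by (auto simp: indicator_def)
      show ?thesis by (subst z(1), subst z(2), simp)
    qed
    finally show "(\<integral>\<^sup>+ t. F s t \<partial>PiM L (\<lambda>_. lborel)) = ennreal C * ennreal (indicator {0..} s * s powr ((p - real m / 2) - 1) * exp (- (1 * s)))" .
  qed
  also have "\<dots> = ennreal C * ennreal (Gamma (p - real m / 2) / 1 powr (p - real m / 2))"
  proof -
    have g: "(\<integral>\<^sup>+ s. ennreal (indicator {0..} s * s powr ((p - real m / 2) - 1) * exp (- (1 * s))) \<partial>lborel) = ennreal (Gamma (p - real m / 2) / 1 powr (p - real m / 2))"
      by (rule gamma_nn[OF pm]) simp
    show ?thesis by (subst nn_integral_cmult) (simp_all only: g, measurable)
  qed
  finally have fin: "(\<integral>\<^sup>+ t. ennreal ((1 + (\<Sum>q\<in>L. w q * (t q)\<^sup>2)) powr (-p)) \<partial>PiM L (\<lambda>_. lborel))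
     = ennreal (1 / Gamma p) * (ennreal C * ennreal (Gamma (p - real m / 2) / 1 powr (p - real m / 2)))" .
  have "ennreal (1 / Gamma p) * (ennreal C * ennreal (Gamma (p - real m / 2) / 1 powr (p - real m / 2)))
     = ennreal (1 / Gamma p * (C * (Gamma (p - real m / 2))))"
    using Gp Cpos pm by (simp add: ennreal_mult'[symmetric])
  also have "1 / Gamma p * (C * (Gamma (p - real m / 2))) = sqrt pi ^ card L * (\<Prod>q\<in>L. w q powr (-1/2)) * Gamma (p - real (card L) / 2) / Gamma p"
    unfolding C_def m_def by simp
  finally have X: "ennreal (1 / Gamma p) * (ennreal C * ennreal (Gamma (p - real m / 2) / 1 powr (p - real m / 2)))
     = ennreal (sqrt pi ^ card L * (\<Prod>q\<in>L. w q powr (-1/2)) * Gamma (p - real (card L) / 2) / Gamma p)" .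
  show ?thesis by (rule trans[OF fin X])
qed

lemma blk_idx_Sigma: "blk_idx n a b = Sigma {a..b} (\<lambda>i. {..<n i})"
  by (auto simp: blk_idx_def)

lemma blk_finite[simp]: "finite (blk_idx n a b)"
  by (simp add: blk_idx_Sigma)

lemma blk_split: "blk_idx n 0 k = blk_idx n 0 0 \<union> blk_idx n 1 k"
  by (auto simp: blk_idx_def)

lemma blk_disj: "blk_idx n 0 0 \<inter> blk_idx n 1 k = {}"
  by (auto simp: blk_idx_def)

lemma blk_card: "card (blk_idx n a b) = (\<Sum>i\<in>{a..b}. n i)"
  by (simp add: blk_idx_Sigma card_SigmaI)

lemma meas_coord: "p \<in> J \<Longrightarrow> (\<lambda>x. x p) \<in> borel_measurable (PiM J (\<lambda>_. lborel))"
  using measurable_component_singleton[of p J "\<lambda>_. lborel"] by simp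

lemma meas_sqnorm:
  assumes "\<And>j. j < n i \<Longrightarrow> (i, j) \<in> J"
  shows "(\<lambda>x. blk_sqnorm n x i) \<in> borel_measurable (PiM J (\<lambda>_. lborel))"
  unfolding blk_sqnorm_def
  by (intro borel_measurable_sum borel_measurable_power meas_coord assms) simp

lemma sqnorm_merge0:
  "blk_sqnorm n (merge (blk_idx n 0 0) J (x, y)) 0 = blk_sqnorm n x 0"
  unfolding blk_sqnorm_def by (intro sum.cong) (auto simp: merge_def blk_idx_def)

lemma sqnorm_merge_pos:
  assumes "1 \<le> i" "i \<le> k"
  shows "blk_sqnorm n (merge (blk_idx n 0 0) (blk_idx n 1 k) (x, y)) i = blk_sqnorm n y i"
  unfolding blk_sqnorm_def using assms by (intro sum.cong) (auto simp: merge_def blk_idx_def)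

lemma sqnorm_scale:
  assumes "\<And>j. j < n i \<Longrightarrow> (i, j) \<in> J"
  shows "blk_sqnorm n (\<lambda>p\<in>J. c * t p) i = c\<^sup>2 * blk_sqnorm n t i"
  unfolding blk_sqnorm_def using assms by (simp add: sum_distrib_left power_mult_distrib)

lemma sqnorm_zero:
  assumes "\<And>j. j < n i \<Longrightarrow> (i, j) \<in> J"
  shows "blk_sqnorm n (\<lambda>p\<in>J. 0) i = 0"
  unfolding blk_sqnorm_def using assms by simp

lemma sqnorm_nonneg: "blk_sqnorm n x i \<ge> 0"
  unfolding blk_sqnorm_def by (simp add: sum_nonneg)

lemma sum_split0: "(\<Sum>i\<le>(k::nat). g i) = g 0 + (\<Sum>i\<in>{1..k}. (g i :: real))"
proof -
  have "{..k} = insert 0 {1..k}" by (simp add: atMost_atLeast0 atLeastAtMost_insertL)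
  then show ?thesis by simp
qed

lemma nsum_split0: "(\<Sum>i\<le>(k::nat). g i) = g 0 + (\<Sum>i\<in>{1..k}. (g i :: nat))"
proof -
  have "{..k} = insert 0 {1..k}" by (simp add: atMost_atLeast0 atLeastAtMost_insertL)
  then show ?thesis by simp
qed

lemma AE_s0_pos:
  assumes "n 0 > 0"
  shows "AE x in PiM (blk_idx n 0 0) (\<lambda>_. lborel). blk_sqnorm n x 0 \<noteq> 0"
proof -
  interpret product_sigma_finite "\<lambda>_. lborel" by standard
  define I0 where "I0 = blk_idx n 0 0"
  have p0: "(0, 0) \<in> I0" using assms by (simp add: I0_def blk_idx_def)
  define B where "B = Pi\<^sub>E I0 (\<lambda>p. if p = (0, 0) then {0::real} else UNIV)"
  have "emeasure (PiM I0 (\<lambda>_. lborel)) B = (\<Prod>p\<in>I0. emeasure lborel (if p = (0, 0) then {0::real} else UNIV))"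
    unfolding B_def by (rule emeasure_PiM) (auto simp: I0_def)
  also have "\<dots> = 0"
    by (rule prod_zero) (use p0 in \<open>auto simp: I0_def\<close>)
  finally have B0: "B \<in> null_sets (PiM I0 (\<lambda>_. lborel))"
    unfolding B_def by (auto intro!: null_setsI sets_PiM_I_finite simp: I0_def)
  show ?thesis unfolding I0_def[symmetric]
  proof (rule AE_I'[OF B0])
    show "{x \<in> space (PiM I0 (\<lambda>_. lborel)). \<not> blk_sqnorm n x 0 \<noteq> 0} \<subseteq> B"
    proof
      fix x assume xx: "x \<in> {x \<in> space (PiM I0 (\<lambda>_. lborel)). \<not> blk_sqnorm n x 0 \<noteq> 0}"
      then have x: "x \<in> space (PiM I0 (\<lambda>_. lborel))" and s: "blk_sqnorm n x 0 = 0" by auto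
      have "(x (0,0))\<^sup>2 \<le> blk_sqnorm n x 0"
        unfolding blk_sqnorm_def using assms by (intro member_le_sum) auto
      then have "x (0, 0) = 0" using s by simp
      then show "x \<in> B" using x by (auto simp: B_def space_PiM PiE_def Pi_def)
    qed
  qed
qed

lemma PiM_scale:
  fixes J :: "'i set" and c :: real and F :: "('i \<Rightarrow> real) \<Rightarrow> ennreal"
  assumes "finite J" "c > 0" "F \<in> borel_measurable (PiM J (\<lambda>_. lborel))"
  shows "(\<integral>\<^sup>+ y. F y \<partial>PiM J (\<lambda>_. lborel)) = ennreal (c ^ card J) * (\<integral>\<^sup>+ t. F (\<lambda>p\<in>J. c * t p) \<partial>PiM J (\<lambda>_. lborel))"
  using assms(1,3)
proof (induction J arbitrary: F rule: finite_induct)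
  case empty
  interpret product_sigma_finite "\<lambda>_. lborel" by standard
  show ?case using nn_integral_empty[of F] nn_integral_empty[of "\<lambda>t. F (\<lambda>p\<in>{}. c*t p)"] by (simp add: restrict_def)
next
  case (insert i J)
  interpret product_sigma_finite "\<lambda>_. lborel" by standard
  note [measurable] = insert.prems
  have "(\<integral>\<^sup>+ y. F y \<partial>PiM (insert i J) (\<lambda>_. lborel)) = (\<integral>\<^sup>+ x. \<integral>\<^sup>+ y. F (x(i := y)) \<partial>lborel \<partial>PiM J (\<lambda>_. lborel))"
    using insert by (subst product_nn_integral_insert) auto
  also have "\<dots> = (\<integral>\<^sup>+ x. ennreal c * \<integral>\<^sup>+ y. F (x(i := c * y)) \<partial>lborel \<partial>PiM J (\<lambda>_. lborel))"
    apply (rule nn_integral_cong)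
    apply (subst nn_integral_real_affine[where c=c and t=0])
    using assms(2) by auto
  also have "\<dots> = ennreal c * (\<integral>\<^sup>+ x. \<integral>\<^sup>+ y. F (x(i := c * y)) \<partial>lborel \<partial>PiM J (\<lambda>_. lborel))"
    by (rule nn_integral_cmult) measurable
  also have "(\<integral>\<^sup>+ x. \<integral>\<^sup>+ y. F (x(i := c * y)) \<partial>lborel \<partial>PiM J (\<lambda>_. lborel))
     = ennreal (c ^ card J) * (\<integral>\<^sup>+ t. \<integral>\<^sup>+ y. F ((\<lambda>p\<in>J. c * t p)(i := c * y)) \<partial>lborel \<partial>PiM J (\<lambda>_. lborel))"
    by (rule insert.IH) measurable
  also have "(\<integral>\<^sup>+ t. \<integral>\<^sup>+ y. F ((\<lambda>p\<in>J. c * t p)(i := c * y)) \<partial>lborel \<partial>PiM J (\<lambda>_. lborel))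
     = (\<integral>\<^sup>+ t. F (\<lambda>p\<in>insert i J. c * t p) \<partial>PiM (insert i J) (\<lambda>_. lborel))"
    using insert
    apply (subst product_nn_integral_insert) 
       apply auto[3]
    apply (intro nn_integral_cong arg_cong[where f=F])
    by (auto simp: fun_eq_iff)
  finally show ?case using insert assms(2)
    by (simp add: ennreal_mult' mult.assoc del: restrict_apply)
qed

theorem mainTheorem3:
  fixes M :: "'a measure" and k :: nat and n :: "nat \<Rightarrow> nat" and \<sigma> :: "nat \<Rightarrow> real"
    and h :: "real \<Rightarrow> real" and X :: "'a \<Rightarrow> (nat \<times> nat) \<Rightarrow> real"
  assumes "prob_space M"
    and "k \<ge> 1"
    and "\<forall>i\<le>k. n i > 0"
    and "\<forall>i\<le>k. \<sigma> i > 0"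
    and "\<forall>t\<ge>0. h t \<ge> 0"
    and "distributed M (blk_lebesgue n 0 k) X
           (\<lambda>x. ennreal ((\<Prod>i\<le>k. \<sigma> i powr (- real (n i)))
                   * h (\<Sum>i\<le>k. \<sigma> i powr (-2) * blk_sqnorm n x i)))"
  shows "distributed M (blk_lebesgue n 1 k)
           (\<lambda>\<omega>. restrict (\<lambda>(i, j). X \<omega> (i, j) / sqrt (blk_sqnorm n (X \<omega>) 0)) (blk_idx n 1 k))
           (\<lambda>t. ennreal (
              Gamma (real (\<Sum>i\<le>k. n i) / 2)
                * (\<Prod>i\<in>{1..k}. (\<sigma> i ^ 2 / \<sigma> 0 ^ 2) powr (- real (n i) / 2))
              / (Gamma (real (n 0) / 2) * pi powr (real (\<Sum>i\<in>{1..k}. n i) / 2))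
              * (1 + (\<Sum>i\<in>{1..k}. (\<sigma> i ^ 2 / \<sigma> 0 ^ 2) powr (-1) * blk_sqnorm n t i))
                  powr (- real (\<Sum>i\<le>k. n i) / 2)))"
proof -
  interpret M: prob_space M by (rule assms(1))
  interpret product_sigma_finite "\<lambda>_. lborel" by standard
  note dist = assms(6)
  define I0 where "I0 = blk_idx n 0 0"
  define I1 where "I1 = blk_idx n 1 k"
  define P0 where "P0 = PiM I0 (\<lambda>_. lborel :: real measure)"
  define P1 where "P1 = PiM I1 (\<lambda>_. lborel :: real measure)"
  define PI where "PI = PiM (I0 \<union> I1) (\<lambda>_. lborel :: real measure)"
  have fin0: "finite I0" and fin1: "finite I1" by (simp_all add: I0_def I1_def)
  have disj: "I0 \<inter> I1 = {}" unfolding I0_def I1_def by (rule blk_disj)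
  have PI_eq: "blk_lebesgue n 0 k = PI" unfolding PI_def I0_def I1_def blk_lebesgue_def blk_split[symmetric] ..
  have P1_eq: "blk_lebesgue n 1 k = P1" unfolding P1_def I1_def blk_lebesgue_def ..
  interpret P0: sigma_finite_measure P0 unfolding P0_def by (rule sigma_finite[OF fin0])
  interpret P1: sigma_finite_measure P1 unfolding P1_def by (rule sigma_finite[OF fin1])
  interpret P01: pair_sigma_finite P0 P1 by standard
  have I0_mem: "(0, j) \<in> I0" if "j < n 0" for j using that by (simp add: I0_def blk_idx_def)
  have I1_mem: "(i, j) \<in> I1" if "1 \<le> i" "i \<le> k" "j < n i" for i j using that by (simp add: I1_def blk_idx_def)
  have I0_fst: "fst p = 0" if "p \<in> I0" for p using that by (auto simp: I0_def blk_idx_def)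
  have I1_fst: "fst p \<noteq> 0" if "p \<in> I1" for p using that by (auto simp: I1_def blk_idx_def)
  define C0 where "C0 = (\<Prod>i\<le>k. \<sigma> i powr (- real (n i)))"
  define Q where "Q x = (\<Sum>i\<le>k. \<sigma> i powr (-2) * blk_sqnorm n x i)" for x :: "nat \<times> nat \<Rightarrow> real"
  define f where "f x = ennreal (C0 * h (Q x))" for x
  have f_meas[measurable]: "f \<in> borel_measurable PI"
    using distributed_borel_measurable[OF dist] unfolding f_def C0_def Q_def PI_eq .
  have X_meas[measurable]: "X \<in> measurable M PI"
    using distributed_measurable[OF dist] unfolding PI_eq .
  have distrX: "distr M PI X = density PI f"
    using distributed_distr_eq_density[OF dist] unfolding f_def C0_def Q_def PI_eq .
  define s0 where "s0 x = blk_sqnorm n x 0" for x :: "nat \<times> nat \<Rightarrow> real"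
  define r where "r x = sqrt (s0 x)" for x
  define Tf where "Tf x = restrict (\<lambda>(i, j). x (i, j) / sqrt (s0 x)) I1" for x :: "nat \<times> nat \<Rightarrow> real"
  define sc where "sc J c t = (\<lambda>p\<in>J. c * t p)" for J :: "(nat \<times> nat) set" and c :: real and t :: "nat \<times> nat \<Rightarrow> real"
  define m where "m = card I1"
  define N where "N = (\<Sum>i\<le>k. n i)"
  have N_eq: "N = n 0 + m" unfolding N_def m_def I1_def blk_card by (rule nsum_split0)
  have card0: "card I0 = n 0" unfolding I0_def blk_card by simp
  define bb where "bb i = (\<sigma> i ^ 2 / \<sigma> 0 ^ 2) powr (-1)" for i
  define u where "u t = (\<Sum>i\<in>{1..k}. bb i * blk_sqnorm n t i)" for t :: "nat \<times> nat \<Rightarrow> real"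
  define \<phi> where "\<phi> t = (1 + u t) powr (- real N / 2)" for t
  define K where "K = (\<integral>\<^sup>+ z. ennreal (r z ^ m) * f (merge I0 I1 (z, \<lambda>p\<in>I1. 0)) \<partial>P0)"
  have s0_meas0[measurable]: "s0 \<in> borel_measurable P0"
    unfolding s0_def[abs_def] P0_def by (rule meas_sqnorm) (rule I0_mem)
  have s0_measI[measurable]: "s0 \<in> borel_measurable PI"
    unfolding s0_def[abs_def] PI_def by (rule meas_sqnorm) (simp add: I0_mem)
  have r_meas0[measurable]: "r \<in> borel_measurable P0" unfolding r_def[abs_def] by measurable
  have coordI: "(\<lambda>x. x p) \<in> borel_measurable PI" if "p \<in> I0 \<union> I1" for p
    unfolding PI_def using that by (rule meas_coord)
  have coord1: "(\<lambda>x. x p) \<in> borel_measurable P1" if "p \<in> I1" for p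
    unfolding P1_def using that by (rule meas_coord)
  have Tf_meas[measurable]: "Tf \<in> measurable PI P1"
    unfolding Tf_def P1_def
  proof (rule measurable_restrict)
    fix p assume p: "p \<in> I1"
    obtain i j where pij: "p = (i, j)" by (cases p)
    have c: "(\<lambda>x. x (i, j)) \<in> borel_measurable PI" using p pij by (intro coordI) auto
    show "(\<lambda>x. case p of (i, j) \<Rightarrow> x (i, j) / sqrt (s0 x)) \<in> measurable PI lborel"
      unfolding pij using c s0_measI by simp
  qed
  have sc_meas: "(\<lambda>(x0, t). sc I1 (r x0) t) \<in> measurable (P0 \<Otimes>\<^sub>M P1) P1"
  proof -
    have "(\<lambda>x. \<lambda>p\<in>I1. r (fst x) * (snd x) p) \<in> measurable (P0 \<Otimes>\<^sub>M P1) (PiM I1 (\<lambda>_. lborel))"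
    proof (rule measurable_restrict)
      fix p assume p: "p \<in> I1"
      have [measurable]: "(\<lambda>t. t p) \<in> borel_measurable P1" using p by (rule coord1)
      show "(\<lambda>x. r (fst x) * (snd x) p) \<in> measurable (P0 \<Otimes>\<^sub>M P1) lborel" by measurable
    qed
    then show ?thesis unfolding P1_def[symmetric] by (simp add: sc_def case_prod_beta')
  qed
  have Phi_meas: "(\<lambda>(x0, t). merge I0 I1 (x0, sc I1 (r x0) t)) \<in> measurable (P0 \<Otimes>\<^sub>M P1) PI"
  proof -
    have "(\<lambda>(x0, t). (x0, sc I1 (r x0) t)) \<in> measurable (P0 \<Otimes>\<^sub>M P1) (P0 \<Otimes>\<^sub>M P1)"
      using sc_meas by (simp add: case_prod_beta') measurable
    from measurable_compose[OF this measurable_merge[where I=I0 and J=I1 and M="\<lambda>_. lborel :: real measure", folded P0_def P1_def PI_def]]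
    show ?thesis by (simp add: case_prod_beta' comp_def)
  qed
  have fPhi_meas: "(\<lambda>(x0, t). f (merge I0 I1 (x0, sc I1 (r x0) t))) \<in> borel_measurable (P0 \<Otimes>\<^sub>M P1)"
    using measurable_compose[OF Phi_meas f_meas] by (simp add: case_prod_beta' comp_def)
  have sq_pos: "\<sigma> i powr (-2) = 1 / (\<sigma> i)\<^sup>2" if "i \<le> k" for i
  proof -
    have "\<sigma> i > 0" using assms(4) that by simp
    then show ?thesis by (simp add: powr_minus divide_inverse)
  qed
  have bb_eq: "bb i = (\<sigma> 0)\<^sup>2 / (\<sigma> i)\<^sup>2" if "i \<le> k" for i
    using assms(4) that unfolding bb_def by (simp add: powr_minus)
  have bb_nonneg: "bb i \<ge> 0" if "i \<le> k" for i using bb_eq[OF that] by simp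
  have u_nonneg: "u t \<ge> 0" for t unfolding u_def using bb_nonneg by (auto intro!: sum_nonneg mult_nonneg_nonneg sqnorm_nonneg)
  have s0_nonneg: "s0 x \<ge> 0" for x unfolding s0_def by (rule sqnorm_nonneg)
  have Q_merge: "Q (merge I0 I1 (x0, y)) = \<sigma> 0 powr (-2) * s0 x0 + (\<Sum>i\<in>{1..k}. \<sigma> i powr (-2) * blk_sqnorm n y i)" for x0 y
  proof -
    have smp: "blk_sqnorm n (merge I0 I1 (x0, y)) i = blk_sqnorm n y i" if "1 \<le> i" "i \<le> k" for i
      unfolding I0_def I1_def by (rule sqnorm_merge_pos[OF that])
    have s1: "(\<Sum>i\<in>{1..k}. \<sigma> i powr (-2) * blk_sqnorm n (merge I0 I1 (x0, y)) i) = (\<Sum>i\<in>{1..k}. \<sigma> i powr (-2) * blk_sqnorm n y i)"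
      by (rule sum.cong[OF refl]) (simp add: smp)
    have s2: "blk_sqnorm n (merge I0 I1 (x0, y)) 0 = s0 x0" unfolding I0_def s0_def by (rule sqnorm_merge0)
    show ?thesis unfolding Q_def sum_split0 s1 s2 ..
  qed
  have TF1: "Tf (merge I0 I1 (x0, sc I1 (r x0) t)) = t" if "s0 x0 > 0" "t \<in> space P1" for x0 t
  proof
    fix p
    have s: "s0 (merge I0 I1 (x0, sc I1 (r x0) t)) = s0 x0"
      unfolding s0_def I0_def by (rule sqnorm_merge0)
    show "Tf (merge I0 I1 (x0, sc I1 (r x0) t)) p = t p"
    proof (cases "p \<in> I1")
      case True
      then have "p \<notin> I0" using disj by auto
      then have "merge I0 I1 (x0, sc I1 (r x0) t) p = r x0 * t p" using True by (simp add: merge_def sc_def)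
      moreover have "r x0 > 0" using that(1) by (simp add: r_def)
      ultimately show ?thesis using True s unfolding Tf_def r_def by (simp add: case_prod_beta')
    next
      case False
      then have "t p = undefined" using that(2) by (cases p) (auto simp: P1_def space_PiM PiE_def extensional_def)
      then show ?thesis using False unfolding Tf_def by simp
    qed
  qed
  have sqnorm_sc1: "blk_sqnorm n (sc I1 c t) i = c\<^sup>2 * blk_sqnorm n t i" if "1 \<le> i" "i \<le> k" for c t i
    unfolding sc_def by (rule sqnorm_scale) (use I1_mem that in auto)
  have sqnorm_z1: "blk_sqnorm n (\<lambda>p\<in>I1. 0) i = 0" if "1 \<le> i" "i \<le> k" for i
    by (rule sqnorm_zero) (use I1_mem that in auto)
  have s0_sc: "s0 (sc I0 c z) = c\<^sup>2 * s0 z" for c z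
    unfolding sc_def s0_def by (rule sqnorm_scale) (rule I0_mem)
  have K_meas: "(\<lambda>z. ennreal (r z ^ m) * f (merge I0 I1 (z, \<lambda>p\<in>I1. 0))) \<in> borel_measurable P0"
  proof -
    have y0: "(\<lambda>p\<in>I1. 0::real) \<in> space P1" by (simp add: P1_def space_PiM)
    have "(\<lambda>z. (z, \<lambda>p\<in>I1. 0::real)) \<in> measurable P0 (P0 \<Otimes>\<^sub>M P1)" using y0 by (rule measurable_Pair2')
    from measurable_compose[OF this measurable_merge[where I=I0 and J=I1 and M="\<lambda>_. lborel :: real measure", folded P0_def P1_def PI_def]]
    have "(\<lambda>z. merge I0 I1 (z, \<lambda>p\<in>I1. 0)) \<in> measurable P0 PI" by simp
    from measurable_compose[OF this f_meas] have [measurable]: "(\<lambda>z. f (merge I0 I1 (z, \<lambda>p\<in>I1. 0))) \<in> borel_measurable P0"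
      by simp
    show ?thesis by measurable
  qed
  have INNER: "(\<integral>\<^sup>+ x0. ennreal (r x0 ^ m) * f (merge I0 I1 (x0, sc I1 (r x0) t)) \<partial>P0) = ennreal (\<phi> t) * K"
    if t: "t \<in> space P1" for t
  proof -
    define c where "c = inverse (sqrt (1 + u t))"
    have u0: "1 + u t > 0" using u_nonneg[of t] by simp
    have c0: "c > 0" unfolding c_def using u0 by simp
    have c2: "c\<^sup>2 = 1 / (1 + u t)"
      unfolding c_def using u0 by (simp add: power_inverse divide_inverse)
    have cN: "c ^ N = \<phi> t"
    proof -
      have "c = (1 + u t) powr (-1/2)" unfolding c_def by (rule powr_neg_half[OF u0, symmetric])
      then have "c ^ N = ((1 + u t) powr (-1/2)) ^ N" by simp
      also have "\<dots> = (1 + u t) powr (real N * (-1/2))" by (rule powr_power) (use u0 in simp)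
      also have "real N * (-1/2) = - real N / 2" by simp
      finally show ?thesis unfolding \<phi>_def .
    qed
    define F where "F x0 = ennreal (r x0 ^ m) * f (merge I0 I1 (x0, sc I1 (r x0) t))" for x0
    have F_meas: "F \<in> borel_measurable P0"
    proof -
      have "(\<lambda>x0. (x0, t)) \<in> measurable P0 (P0 \<Otimes>\<^sub>M P1)" using t by (rule measurable_Pair2')
      from measurable_compose[OF this fPhi_meas] have [measurable]: "(\<lambda>x0. f (merge I0 I1 (x0, sc I1 (r x0) t))) \<in> borel_measurable P0"
        by simp
      show ?thesis unfolding F_def by measurable
    qed
    have "(\<integral>\<^sup>+ x0. F x0 \<partial>P0) = ennreal (c ^ card I0) * (\<integral>\<^sup>+ z. F (sc I0 c z) \<partial>P0)"
      unfolding P0_def sc_def by (rule PiM_scale[OF fin0 c0]) (use F_meas in \<open>simp add: P0_def\<close>)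
    also have "(\<integral>\<^sup>+ z. F (sc I0 c z) \<partial>P0) = (\<integral>\<^sup>+ z. ennreal (c ^ m) * (ennreal (r z ^ m) * f (merge I0 I1 (z, \<lambda>p\<in>I1. 0))) \<partial>P0)"
    proof (rule nn_integral_cong)
      fix z
      have rz: "r (sc I0 c z) = c * r z"
        unfolding r_def s0_sc using c0 by (simp add: real_sqrt_mult)
      have "Q (merge I0 I1 (sc I0 c z, sc I1 (c * r z) t)) = Q (merge I0 I1 (z, \<lambda>p\<in>I1. 0))"
      proof -
        have rr: "(r z)\<^sup>2 = s0 z" unfolding r_def using s0_nonneg by simp
        have A1: "(\<Sum>i\<in>{1..k}. \<sigma> i powr (-2) * blk_sqnorm n (sc I1 (c * r z) t) i)
              = c\<^sup>2 * s0 z * (\<Sum>i\<in>{1..k}. \<sigma> i powr (-2) * blk_sqnorm n t i)"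
          unfolding sum_distrib_left
          by (rule sum.cong[OF refl]) (simp add: sqnorm_sc1 power_mult_distrib rr)
        have A2: "(\<Sum>i\<in>{1..k}. \<sigma> i powr (-2) * blk_sqnorm n (\<lambda>p\<in>I1. 0) i) = 0"
          by (rule sum.neutral) (simp add: sqnorm_z1)
        have A3: "(\<Sum>i\<in>{1..k}. \<sigma> i powr (-2) * blk_sqnorm n t i) = \<sigma> 0 powr (-2) * u t"
          unfolding u_def sum_distrib_left
          by (rule sum.cong[OF refl]) (use assms(4) in \<open>auto simp: sq_pos bb_eq\<close>)
        have "c\<^sup>2 * s0 z * (\<sigma> 0 powr (-2) + \<sigma> 0 powr (-2) * u t) = \<sigma> 0 powr (-2) * s0 z"
          unfolding c2 using u0 by (simp add: field_simps)
        then show ?thesis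
          unfolding Q_merge A1 A2 A3 s0_sc by (simp add: algebra_simps)
      qed
      then have "f (merge I0 I1 (sc I0 c z, sc I1 (c * r z) t)) = f (merge I0 I1 (z, \<lambda>p\<in>I1. 0))"
        unfolding f_def by simp
      then show "F (sc I0 c z) = ennreal (c ^ m) * (ennreal (r z ^ m) * f (merge I0 I1 (z, \<lambda>p\<in>I1. 0)))"
        unfolding F_def rz using c0 by (simp add: power_mult_distrib ennreal_mult' mult.assoc r_def)
    qed
    also have "\<dots> = ennreal (c ^ m) * K"
      unfolding K_def by (rule nn_integral_cmult) (rule K_meas)
    finally show ?thesis
      unfolding F_def card0 cN[symmetric] N_eq using c0
      by (simp add: power_add ennreal_mult' mult.assoc)
  qed
  have AE0: "AE x0 in P0. s0 x0 > 0"
  proof -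
    have "AE x0 in P0. s0 x0 \<noteq> 0"
      unfolding P0_def I0_def s0_def by (rule AE_s0_pos) (use assms(3) in simp)
    then show ?thesis using s0_nonneg by (auto simp: order_le_less)
  qed
  have MAIN: "(\<integral>\<^sup>+ x. f x * indicator A (Tf x) \<partial>PI) = (\<integral>\<^sup>+ t. ennreal (\<phi> t) * K * indicator A t \<partial>P1)"
    if A: "A \<in> sets P1" for A
  proof -
    have [measurable]: "A \<in> sets P1" by (rule A)
    have "(\<integral>\<^sup>+ x. f x * indicator A (Tf x) \<partial>PI)
        = (\<integral>\<^sup>+ x0. \<integral>\<^sup>+ y. f (merge I0 I1 (x0, y)) * indicator A (Tf (merge I0 I1 (x0, y))) \<partial>P1 \<partial>P0)"
      unfolding PI_def P0_def P1_def
      by (rule product_nn_integral_fold[OF disj fin0 fin1]) (unfold PI_def[symmetric] P1_def[symmetric], measurable)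
    also have "\<dots> = (\<integral>\<^sup>+ x0. ennreal (r x0 ^ m) * (\<integral>\<^sup>+ t. f (merge I0 I1 (x0, sc I1 (r x0) t)) * indicator A t \<partial>P1) \<partial>P0)"
    proof (rule nn_integral_cong_AE)
      show "AE x0 in P0. (\<integral>\<^sup>+ y. f (merge I0 I1 (x0, y)) * indicator A (Tf (merge I0 I1 (x0, y))) \<partial>P1)
          = ennreal (r x0 ^ m) * (\<integral>\<^sup>+ t. f (merge I0 I1 (x0, sc I1 (r x0) t)) * indicator A t \<partial>P1)"
        using AE0 AE_space
      proof eventually_elim
        case (elim x0)
        have rpos: "r x0 > 0" using elim(1) by (simp add: r_def)
        have mg: "(\<lambda>y. merge I0 I1 (x0, y)) \<in> measurable P1 PI"
        proof -
          have "(\<lambda>y. (x0, y)) \<in> measurable P1 (P0 \<Otimes>\<^sub>M P1)" using elim(2) by (rule measurable_Pair1')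
          from measurable_compose[OF this measurable_merge[where I=I0 and J=I1 and M="\<lambda>_. lborel :: real measure", folded P0_def P1_def PI_def]]
          show ?thesis by simp
        qed
        have [measurable]: "(\<lambda>y. f (merge I0 I1 (x0, y))) \<in> borel_measurable P1"
          using measurable_compose[OF mg f_meas] by simp
        have [measurable]: "(\<lambda>y. Tf (merge I0 I1 (x0, y))) \<in> measurable P1 P1"
          using measurable_compose[OF mg Tf_meas] by simp
        have "(\<integral>\<^sup>+ y. f (merge I0 I1 (x0, y)) * indicator A (Tf (merge I0 I1 (x0, y))) \<partial>P1)
            = ennreal (r x0 ^ card I1) * (\<integral>\<^sup>+ t. f (merge I0 I1 (x0, sc I1 (r x0) t)) * indicator A (Tf (merge I0 I1 (x0, sc I1 (r x0) t))) \<partial>P1)"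
          unfolding P1_def sc_def by (rule PiM_scale[OF fin1 rpos]) (unfold P1_def[symmetric], measurable)
        also have "(\<integral>\<^sup>+ t. f (merge I0 I1 (x0, sc I1 (r x0) t)) * indicator A (Tf (merge I0 I1 (x0, sc I1 (r x0) t))) \<partial>P1)
            = (\<integral>\<^sup>+ t. f (merge I0 I1 (x0, sc I1 (r x0) t)) * indicator A t \<partial>P1)"
          by (rule nn_integral_cong) (simp add: TF1[OF elim(1)])
        finally show ?case unfolding m_def .
      qed
    qed
    also have "\<dots> = (\<integral>\<^sup>+ x0. \<integral>\<^sup>+ t. ennreal (r x0 ^ m) * f (merge I0 I1 (x0, sc I1 (r x0) t)) * indicator A t \<partial>P1 \<partial>P0)"
    proof (rule nn_integral_cong)
      fix x0 assume x0: "x0 \<in> space P0"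
      have "(\<lambda>t. (x0, t)) \<in> measurable P1 (P0 \<Otimes>\<^sub>M P1)" using x0 by (rule measurable_Pair1')
      from measurable_compose[OF this fPhi_meas]
      have [measurable]: "(\<lambda>t. f (merge I0 I1 (x0, sc I1 (r x0) t))) \<in> borel_measurable P1" by simp
      show "ennreal (r x0 ^ m) * (\<integral>\<^sup>+ t. f (merge I0 I1 (x0, sc I1 (r x0) t)) * indicator A t \<partial>P1)
          = (\<integral>\<^sup>+ t. ennreal (r x0 ^ m) * f (merge I0 I1 (x0, sc I1 (r x0) t)) * indicator A t \<partial>P1)"
        by (subst nn_integral_cmult[symmetric]) (measurable, simp add: mult.assoc)
    qed
    also have "\<dots> = (\<integral>\<^sup>+ t. \<integral>\<^sup>+ x0. ennreal (r x0 ^ m) * f (merge I0 I1 (x0, sc I1 (r x0) t)) * indicator A t \<partial>P0 \<partial>P1)"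
    proof (rule P01.Fubini'[symmetric])
      have [measurable]: "(\<lambda>(x0, t). f (merge I0 I1 (x0, sc I1 (r x0) t))) \<in> borel_measurable (P0 \<Otimes>\<^sub>M P1)"
        by (rule fPhi_meas)
      have [measurable]: "(\<lambda>x. f (merge I0 I1 (fst x, sc I1 (r (fst x)) (snd x)))) \<in> borel_measurable (P0 \<Otimes>\<^sub>M P1)"
        using fPhi_meas by (simp add: case_prod_beta')
      have "(\<lambda>x. ennreal (r (fst x) ^ m) * f (merge I0 I1 (fst x, sc I1 (r (fst x)) (snd x))) * indicator A (snd x)) \<in> borel_measurable (P0 \<Otimes>\<^sub>M P1)"
        by measurable
      then show "(\<lambda>(x0, t). ennreal (r x0 ^ m) * f (merge I0 I1 (x0, sc I1 (r x0) t)) * indicator A t) \<in> borel_measurable (P0 \<Otimes>\<^sub>M P1)"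
        by (simp add: case_prod_beta')
    qed
    also have "\<dots> = (\<integral>\<^sup>+ t. ennreal (\<phi> t) * K * indicator A t \<partial>P1)"
    proof (rule nn_integral_cong)
      fix t assume t: "t \<in> space P1"
      have "(\<lambda>x0. (x0, t)) \<in> measurable P0 (P0 \<Otimes>\<^sub>M P1)" using t by (rule measurable_Pair2')
      from measurable_compose[OF this fPhi_meas]
      have [measurable]: "(\<lambda>x0. f (merge I0 I1 (x0, sc I1 (r x0) t))) \<in> borel_measurable P0" by simp
      have "(\<integral>\<^sup>+ x0. ennreal (r x0 ^ m) * f (merge I0 I1 (x0, sc I1 (r x0) t)) * indicator A t \<partial>P0)
          = (\<integral>\<^sup>+ x0. ennreal (r x0 ^ m) * f (merge I0 I1 (x0, sc I1 (r x0) t)) \<partial>P0) * indicator A t"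
        by (rule nn_integral_multc) measurable
      then show "(\<integral>\<^sup>+ x0. ennreal (r x0 ^ m) * f (merge I0 I1 (x0, sc I1 (r x0) t)) * indicator A t \<partial>P0)
          = ennreal (\<phi> t) * K * indicator A t"
        using INNER[OF t] by simp
    qed
    finally show ?thesis .
  qed
  have u_meas[measurable]: "u \<in> borel_measurable P1"
  proof -
    have "(\<lambda>t. blk_sqnorm n t i) \<in> borel_measurable P1" if "i \<in> {1..k}" for i
      unfolding P1_def by (rule meas_sqnorm) (use I1_mem that in auto)
    then show ?thesis unfolding u_def[abs_def] by (intro borel_measurable_sum borel_measurable_times) auto
  qed
  have phi_meas[measurable]: "\<phi> \<in> borel_measurable P1" unfolding \<phi>_def[abs_def] by measurable
  define g' where "g' t = ennreal (\<phi> t) * K" for t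
  have g'_meas[measurable]: "g' \<in> borel_measurable P1" unfolding g'_def[abs_def] by measurable
  have Tfd: "Tf \<in> measurable (density PI f) P1"
    using Tf_meas measurable_cong_sets[OF sets_density[of PI f] refl, of P1] by simp
  have DISTR: "distr M P1 (\<lambda>\<omega>. Tf (X \<omega>)) = density P1 g'"
  proof -
    have "distr M P1 (\<lambda>\<omega>. Tf (X \<omega>)) = distr (distr M PI X) P1 Tf"
      using distr_distr[OF Tf_meas X_meas] by (simp add: comp_def)
    also have "\<dots> = distr (density PI f) P1 Tf" unfolding distrX ..
    also have "\<dots> = density P1 g'"
    proof (rule measure_eqI)
      show "sets (distr (density PI f) P1 Tf) = sets (density P1 g')" by simp
    next
      fix A assume "A \<in> sets (distr (density PI f) P1 Tf)"
      then have A: "A \<in> sets P1" by simp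
      have pre: "Tf -` A \<inter> space PI \<in> sets PI" using measurable_sets[OF Tf_meas A] .
      have "emeasure (distr (density PI f) P1 Tf) A = emeasure (density PI f) (Tf -` A \<inter> space PI)"
        using emeasure_distr[OF Tfd A] by simp
      also have "\<dots> = (\<integral>\<^sup>+ x. f x * indicator (Tf -` A \<inter> space PI) x \<partial>PI)"
        by (rule emeasure_density[OF f_meas pre])
      also have "\<dots> = (\<integral>\<^sup>+ x. f x * indicator A (Tf x) \<partial>PI)"
        by (rule nn_integral_cong) (simp add: indicator_def)
      also have "\<dots> = (\<integral>\<^sup>+ t. ennreal (\<phi> t) * K * indicator A t \<partial>P1)" by (rule MAIN[OF A])
      also have "\<dots> = emeasure (density P1 g') A"
        unfolding g'_def by (rule emeasure_density[symmetric]) (use A in measurable)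
      finally show "emeasure (distr (density PI f) P1 Tf) A = emeasure (density P1 g') A" .
    qed
    finally show ?thesis .
  qed
  have T_meas: "(\<lambda>\<omega>. Tf (X \<omega>)) \<in> measurable M P1" by measurable
  have total: "(\<integral>\<^sup>+ t. ennreal (\<phi> t) \<partial>P1) * K = 1"
  proof -
    interpret D: prob_space "distr M P1 (\<lambda>\<omega>. Tf (X \<omega>))" by (rule M.prob_space_distr[OF T_meas])
    have "1 = emeasure (distr M P1 (\<lambda>\<omega>. Tf (X \<omega>))) (space P1)"
      using D.emeasure_space_1 by simp
    also have "\<dots> = emeasure (density P1 g') (space P1)" unfolding DISTR ..
    also have "\<dots> = (\<integral>\<^sup>+ t. g' t * indicator (space P1) t \<partial>P1)"
      by (rule emeasure_density) auto
    also have "\<dots> = (\<integral>\<^sup>+ t. ennreal (\<phi> t) * K \<partial>P1)"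
      unfolding g'_def by (rule nn_integral_cong) simp
    also have "\<dots> = (\<integral>\<^sup>+ t. ennreal (\<phi> t) \<partial>P1) * K"
      by (rule nn_integral_multc) measurable
    finally show ?thesis ..
  qed
  define \<beta> where "\<beta> i = \<sigma> i ^ 2 / \<sigma> 0 ^ 2" for i
  have \<beta>pos: "\<beta> i > 0" if "i \<le> k" for i
  proof -
    have "\<sigma> i > 0" "\<sigma> 0 > 0" using assms(4) that by auto
    then show ?thesis unfolding \<beta>_def by simp
  qed
  have bb\<beta>: "bb i = \<beta> i powr (-1)" for i unfolding bb_def \<beta>_def ..
  define JJ where "JJ = sqrt pi ^ m * (\<Prod>i\<in>{1..k}. \<beta> i powr (real (n i) / 2)) * Gamma (real (n 0) / 2) / Gamma (real N / 2)"
  have n0pos: "n 0 > 0" using assms(3) by simp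
  have Jval: "(\<integral>\<^sup>+ t. ennreal (\<phi> t) \<partial>P1) = ennreal JJ"
  proof -
    have w: "\<forall>q\<in>I1. bb (fst q) > 0"
    proof
      fix q assume "q \<in> I1"
      then have "fst q \<le> k" by (auto simp: I1_def blk_idx_def)
      then show "bb (fst q) > 0" using \<beta>pos[of "fst q"] unfolding bb\<beta> by simp
    qed
    have p: "real N / 2 > real (card I1) / 2" unfolding N_eq m_def using n0pos by simp
    have u_eq: "u t = (\<Sum>q\<in>I1. bb (fst q) * (t q)\<^sup>2)" for t
    proof -
      have "(\<Sum>q\<in>I1. bb (fst q) * (t q)\<^sup>2) = (\<Sum>i\<in>{1..k}. \<Sum>j\<in>{..<n i}. bb i * (t (i, j))\<^sup>2)"
        unfolding I1_def blk_idx_Sigma by (subst sum.Sigma) (auto simp: split_beta)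
      then show ?thesis unfolding u_def blk_sqnorm_def by (simp add: sum_distrib_left)
    qed
    have "(\<integral>\<^sup>+ t. ennreal (\<phi> t) \<partial>P1) = (\<integral>\<^sup>+ t. ennreal ((1 + (\<Sum>q\<in>I1. bb (fst q) * (t q)\<^sup>2)) powr (- (real N / 2))) \<partial>P1)"
      unfolding \<phi>_def u_eq by simp
    also have "\<dots> = ennreal (sqrt pi ^ card I1 * (\<Prod>q\<in>I1. bb (fst q) powr (-1/2)) * Gamma (real N / 2 - real (card I1) / 2) / Gamma (real N / 2))"
      unfolding P1_def by (rule student_integral[OF fin1 w p])
    also have "sqrt pi ^ card I1 * (\<Prod>q\<in>I1. bb (fst q) powr (-1/2)) * Gamma (real N / 2 - real (card I1) / 2) / Gamma (real N / 2) = JJ"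
    proof -
      have g: "real N / 2 - real (card I1) / 2 = real (n 0) / 2" unfolding N_eq m_def by (simp add: field_simps)
      have "(\<Prod>q\<in>I1. bb (fst q) powr (-1/2)) = (\<Prod>i\<in>{1..k}. \<Prod>j\<in>{..<n i}. bb i powr (-1/2))"
        unfolding I1_def blk_idx_Sigma by (subst prod.Sigma) (auto simp: split_beta)
      also have "\<dots> = (\<Prod>i\<in>{1..k}. \<beta> i powr (real (n i) / 2))"
      proof (rule prod.cong[OF refl])
        fix i assume i: "i \<in> {1..k}"
        then have bp: "\<beta> i > 0" using \<beta>pos by simp
        have bbh: "bb i powr (-1/2) = \<beta> i powr (1/2)" unfolding bb\<beta> powr_powr by simp
        have "(\<Prod>j\<in>{..<n i}. bb i powr (-1/2)) = (\<beta> i powr (1/2)) ^ n i" unfolding bbh by simp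
        also have "(\<beta> i powr (1/2)) ^ n i = \<beta> i powr (real (n i) * (1/2))" by (rule powr_power) (use bp in simp)
        finally show "(\<Prod>j\<in>{..<n i}. bb i powr (-1/2)) = \<beta> i powr (real (n i) / 2)" by simp
      qed
      finally show ?thesis unfolding JJ_def g m_def by simp
    qed
    finally show ?thesis .
  qed
  have JJpos: "JJ > 0"
  proof -
    have G: "Gamma (real N / 2) > 0" "Gamma (real (n 0) / 2) > 0" using n0pos unfolding N_eq by simp_all
    have P: "(\<Prod>i\<in>{1..k}. \<beta> i powr (real (n i) / 2)) > 0"
    proof (rule prod_pos)
      fix i assume "i \<in> {1..k}"
      then have "\<beta> i > 0" using \<beta>pos by simp
      then show "\<beta> i powr (real (n i) / 2) > 0" by simp
    qed
    show ?thesis unfolding JJ_def using G P by simp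
  qed
  have K_eq: "K = ennreal (1 / JJ)"
    using ennreal_solve[OF JJpos, of 1 K] total Jval by (simp add: mult.commute)
  define D where "D = Gamma (real N / 2) * (\<Prod>i\<in>{1..k}. (\<sigma> i ^ 2 / \<sigma> 0 ^ 2) powr (- real (n i) / 2))
              / (Gamma (real (n 0) / 2) * pi powr (real (\<Sum>i\<in>{1..k}. n i) / 2))"
  have D_eq: "1 / JJ = D"
  proof -
    have m_eq: "(\<Sum>i\<in>{1..k}. n i) = m" unfolding m_def I1_def blk_card ..
    have sp: "sqrt pi ^ m = pi powr (real m / 2)"
    proof -
      have "sqrt pi ^ m = (pi powr (1/2)) ^ m" by (simp add: powr_half_sqrt)
      also have "\<dots> = pi powr (real m * (1/2))" by (rule powr_power) simp
      finally show ?thesis by simp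
    qed
    have pp: "(\<Prod>i\<in>{1..k}. \<beta> i powr (real (n i) / 2)) * (\<Prod>i\<in>{1..k}. \<beta> i powr (- real (n i) / 2)) = 1"
    proof -
      have "(\<Prod>i\<in>{1..k}. \<beta> i powr (real (n i) / 2)) * (\<Prod>i\<in>{1..k}. \<beta> i powr (- real (n i) / 2))
          = (\<Prod>i\<in>{1..k}. \<beta> i powr (real (n i) / 2) * \<beta> i powr (- real (n i) / 2))"
        by (simp add: prod.distrib)
      also have "\<dots> = (\<Prod>i\<in>{1..k}. 1)"
      proof (rule prod.cong[OF refl])
        fix i assume "i \<in> {1..k}"
        then have "\<beta> i > 0" using \<beta>pos by simp
        then show "\<beta> i powr (real (n i) / 2) * \<beta> i powr (- real (n i) / 2) = 1"
          by (simp add: powr_add[symmetric])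
      qed
      finally show ?thesis by simp
    qed
    have G1: "Gamma (real N / 2) > 0" "Gamma (real (n 0) / 2) > 0" using n0pos unfolding N_eq by simp_all
    have pi0: "pi powr (real m / 2) > 0" by simp
    have "JJ * D = 1"
      unfolding JJ_def D_def m_eq sp \<beta>_def[symmetric]
      using G1 pi0 pp by (simp add: field_simps)
    then show ?thesis using JJpos by (simp add: field_simps)
  qed
  have T_eq: "(\<lambda>\<omega>. restrict (\<lambda>(i, j). X \<omega> (i, j) / sqrt (blk_sqnorm n (X \<omega>) 0)) (blk_idx n 1 k)) = (\<lambda>\<omega>. Tf (X \<omega>))"
    unfolding Tf_def s0_def I1_def ..
  have g_eq: "(\<lambda>t. ennreal (
              Gamma (real (\<Sum>i\<le>k. n i) / 2)
                * (\<Prod>i\<in>{1..k}. (\<sigma> i ^ 2 / \<sigma> 0 ^ 2) powr (- real (n i) / 2))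
              / (Gamma (real (n 0) / 2) * pi powr (real (\<Sum>i\<in>{1..k}. n i) / 2))
              * (1 + (\<Sum>i\<in>{1..k}. (\<sigma> i ^ 2 / \<sigma> 0 ^ 2) powr (-1) * blk_sqnorm n t i))
                  powr (- real (\<Sum>i\<le>k. n i) / 2))) = g'"
  proof
    fix t
    have D0: "D \<ge> 0" unfolding D_eq[symmetric] using JJpos by simp
    have "ennreal (D * \<phi> t) = g' t"
      unfolding g'_def K_eq D_eq using D0 by (simp add: ennreal_mult' mult.commute)
    then show "ennreal (
              Gamma (real (\<Sum>i\<le>k. n i) / 2)
                * (\<Prod>i\<in>{1..k}. (\<sigma> i ^ 2 / \<sigma> 0 ^ 2) powr (- real (n i) / 2))
              / (Gamma (real (n 0) / 2) * pi powr (real (\<Sum>i\<in>{1..k}. n i) / 2))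
              * (1 + (\<Sum>i\<in>{1..k}. (\<sigma> i ^ 2 / \<sigma> 0 ^ 2) powr (-1) * blk_sqnorm n t i))
                  powr (- real (\<Sum>i\<le>k. n i) / 2)) = g' t"
      unfolding D_def \<phi>_def u_def bb_def N_def .
  qed
  show ?thesis
    unfolding distributed_def T_eq g_eq P1_eq
    using DISTR g'_meas T_meas by simp
qed

end
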